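(* Let $(X,d)$ be a metric space and $\mu\colon X^3\to X$ a ternary operation. Then $\mu$ satisfies conditions (C1) and (C2) below if and only if it satisfies conditions (C0)', (C1)' and (C2)' below. (C1): There is an affine function $\rho(t)=Kt+H_0$ such that for all $a,b,c,a',b',c'\in X$, $d(\mu(a,b,c),\mu(a',b',c'))\leqslant \rho(d(a,a')+d(b,b')+d(c,c'))$. (C2): There is a function $H\colon\mathbb N\to[0,\infty)$ such that for every finite subset $A\subseteq X$ with $1\leqslant |A|\leqslant p$ there exist a finite median algebra $(\Pi,\mu_\Pi)$ and maps $\pi\colon A\to\Pi$, $\lambda\colon\Pi\to X$ such that for all $x,y,z\in\Pi$ and $a\in A$: $d(\lambda\mu_\Pi(x,y,z),\mu(\lambda x,\lambda y,\lambda z))\leqslant H(p)$ and $d(\lambda\pi a,a)\leqslant H(p)$. (C0)': There is a constant $\kappa_0$ such that for all $a_1,a_2,a_3\in X$, $d(\mu(a_1,a_1,a_2),a_1)\leqslant\kappa_0$, and $d(\mu(a_{\sigma(1)},a_{\sigma(2)},a_{\sigma(3)}),\mu(a_1,a_2,a_3))\leqslant\kappa_0$ for every permutation $\sigma$ of $\{1,2,3\}$. (C1)': There is an affine function $\rho\colon[0,\infty)\to[0,\infty)$ such that for all $a,a',b,c\in X$, $d(\mu(a,b,c),\mu(a',b,c))\leqslant\rho(d(a,a'))$. (C2)': There is a constant $\kappa_4>0$ such that for all $a,b,c,d\in X$, $d\big(\mu(\mu(a,b,c),b,d),\,\mu(a,b,\mu(c,b,d))\big)\leqslant\kappa_4$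.
   Context: A median algebra is a set $Y$ with a ternary operation $m$ satisfying: $m(a,a,b)=a$; $m(a_1,a_2,a_3)$ is invariant under permutations of its arguments; and $m(m(a,b,c),b,d)=m(a,b,m(c,b,d))$ for all $a,b,c,d\in Y$. *)

theory Defs
  imports "HOL-Analysis.Analysis" "HOL-Combinatorics.Permutations"
begin

definition median_algebra_on :: "'b set \<Rightarrow> ('b \<Rightarrow> 'b \<Rightarrow> 'b \<Rightarrow> 'b) \<Rightarrow> bool" where
  "median_algebra_on P m \<longleftrightarrow>
     (\<forall>a\<in>P. \<forall>b\<in>P. \<forall>c\<in>P. m a b c \<in> P) \<and>
     (\<forall>a\<in>P. \<forall>b\<in>P. m a a b = a) \<and>
     (\<forall>a\<in>P. \<forall>b\<in>P. \<forall>c\<in>P. m a b c = m b a c \<and> m a b c = m a c b) \<and>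
     (\<forall>a\<in>P. \<forall>b\<in>P. \<forall>c\<in>P. \<forall>d\<in>P. m (m a b c) b d = m a b (m c b d))"

definition C1 :: "('a::metric_space \<Rightarrow> 'a \<Rightarrow> 'a \<Rightarrow> 'a) \<Rightarrow> bool" where
  "C1 \<mu> \<longleftrightarrow> (\<exists>K H0::real. \<forall>a b c a' b' c'.
      dist (\<mu> a b c) (\<mu> a' b' c') \<le> K * (dist a a' + dist b b' + dist c c') + H0)"

text \<open>Finite median algebras are represented on finite carrier subsets of nat
  (every finite median algebra is isomorphic to one of these).\<close>
definition C2 :: "('a::metric_space \<Rightarrow> 'a \<Rightarrow> 'a \<Rightarrow> 'a) \<Rightarrow> bool" where
  "C2 \<mu> \<longleftrightarrow> (\<exists>H::nat \<Rightarrow> real. (\<forall>p. H p \<ge> 0) \<and>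
     (\<forall>p A. finite A \<and> 1 \<le> card A \<and> card A \<le> p \<longrightarrow>
        (\<exists>(P::nat set) m (\<pi>::'a \<Rightarrow> nat) (lam::nat \<Rightarrow> 'a).
           finite P \<and> median_algebra_on P m \<and> (\<forall>a\<in>A. \<pi> a \<in> P) \<and>
           (\<forall>x\<in>P. \<forall>y\<in>P. \<forall>z\<in>P.
              dist (lam (m x y z)) (\<mu> (lam x) (lam y) (lam z)) \<le> H p) \<and>
           (\<forall>a\<in>A. dist (lam (\<pi> a)) a \<le> H p))))"

definition C0' :: "('a::metric_space \<Rightarrow> 'a \<Rightarrow> 'a \<Rightarrow> 'a) \<Rightarrow> bool" where
  "C0' \<mu> \<longleftrightarrow> (\<exists>\<kappa>0::real.
     (\<forall>a1 a2. dist (\<mu> a1 a1 a2) a1 \<le> \<kappa>0) \<and>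
     (\<forall>(a::nat \<Rightarrow> 'a) \<sigma>. \<sigma> permutes {1,2,3} \<longrightarrow>
        dist (\<mu> (a (\<sigma> 1)) (a (\<sigma> 2)) (a (\<sigma> 3))) (\<mu> (a 1) (a 2) (a 3)) \<le> \<kappa>0))"

definition C1' :: "('a::metric_space \<Rightarrow> 'a \<Rightarrow> 'a \<Rightarrow> 'a) \<Rightarrow> bool" where
  "C1' \<mu> \<longleftrightarrow> (\<exists>K H::real. K \<ge> 0 \<and> H \<ge> 0 \<and>
     (\<forall>a a' b c. dist (\<mu> a b c) (\<mu> a' b c) \<le> K * dist a a' + H))"

definition C2' :: "('a::metric_space \<Rightarrow> 'a \<Rightarrow> 'a \<Rightarrow> 'a) \<Rightarrow> bool" where
  "C2' \<mu> \<longleftrightarrow> (\<exists>\<kappa>4::real. \<kappa>4 > 0 \<and>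
     (\<forall>a b c d. dist (\<mu> (\<mu> a b c) b d) (\<mu> a b (\<mu> c b d)) \<le> \<kappa>4))"

end

theory Submission
  imports Defs
begin

locale med =
  fixes m :: "'a \<Rightarrow> 'a \<Rightarrow> 'a \<Rightarrow> 'a"
  assumes maj: "m a a b = a"
  and s1: "m a b c = m b a c" and s2: "m a b c = m a c b"
  and asc: "m (m a b c) b d = m a b (m c b d)"
begin
lemma la_f9: "(m v0 v1 v0) = v0" by (metis s2 maj)
lemma la_f10: "(m v9 v8 v10) = (m v8 v10 v9)" by (metis s2 s1)
lemma la_f22: "(m v3 v4 (m v5 v4 v6)) = (m (m v3 v5 v4) v4 v6)" by (metis asc s2)
lemma la_f24: "(m v11 v12 (m v13 v12 v14)) = (m (m v12 v11 v13) v12 v14)" by (metis asc s1)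
lemma la_f27: "(m (m v4 v5 v6) v7 v5) = (m v4 v5 (m v6 v5 v7))" by (metis asc s2)
lemma la_f29: "(m v13 (m v12 v13 v14) v15) = (m v12 v13 (m v14 v13 v15))" by (metis asc s1)
lemma la_f45: "(m v1 v2 v3) = (m v1 v2 (m v1 v2 v3))" by (metis asc la_f9)
lemma la_f63: "(m v8 v10 v9) = (m v9 v10 v8)" by (metis la_f10 s2)
lemma la_f78: "(m v24 v25 (m v26 v25 v27)) = (m v27 (m v24 v25 v26) v25)" by (metis la_f10 asc)
lemma la_f105: "(m v30 v31 (m v32 v31 v33)) = (m v33 v31 (m v30 v31 v32))" by (metis la_f63 asc)
lemma la_f142: "(m v7 v6 v8) = (m v6 v7 (m v7 v6 v8))" by (metis la_f45 s1)
lemma la_f148: "(m v26 v25 v24) = (m v24 v25 (m v26 v25 v24))" by (metis la_f45 la_f63)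
lemma la_f178: "(m v41 (m v41 v42 v43) (m v42 (m v41 v42 v43) v44)) = (m (m v41 v42 v43) (m v41 v42 v43) v44)" by (metis la_f22 la_f45)
lemma la_f179: "(m (m v45 v46 v47) v48 (m v46 v48 v49)) = (m (m v45 v46 (m v47 v46 v48)) v48 v49)" by (metis la_f22 asc)
lemma la_f207: "(m v41 v42 v43) = (m v41 (m v41 v42 v43) (m v42 (m v41 v42 v43) v44))" by (metis la_f178 maj)
lemma la_f208: "(m (m v45 v46 (m v47 v46 v48)) v48 v49) = (m v46 v48 (m v49 v48 (m v45 v46 v47)))" by (metis la_f179 la_f105)
lemma la_f361: "(m v3 v5 v4) = (m v3 v4 (m v3 v4 v5))" by (metis la_f27 la_f9)
lemma la_f368: "(m v29 v30 (m v31 v30 v32)) = (m (m v31 v29 v30) v32 v30)" by (metis la_f27 la_f10)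
lemma la_f379: "(m v7 v6 (m v8 v6 v7)) = (m v6 v7 (m v8 v7 v6))" by (metis la_f27 la_f24)
lemma la_f426: "(m v7 v6 (m v8 v6 v7)) = (m v8 v7 v6)" by (metis la_f379 la_f148)
lemma la_f470: "(m v21 v22 (m (m v21 v22 v23) v22 v24)) = (m (m v21 v23 v22) v22 v24)" by (metis asc la_f361)
lemma la_f472: "(m v31 (m v31 v32 v33) (m v32 (m v31 v32 v33) v34)) = (m (m v31 v33 v32) (m v31 v32 v33) v34)" by (metis la_f22 la_f361)
lemma la_f494: "(m v21 v22 (m (m v21 v22 v23) v22 v24)) = (m v22 (m v21 v23 v22) v24)" by (metis la_f470 s1)
lemma la_f495: "(m v22 (m v21 v23 v22) v24) = (m v21 v22 (m v22 (m v21 v22 v23) v24))" by (metis la_f494 s1)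
lemma la_f496: "(m v31 v32 v33) = (m (m v31 v33 v32) (m v31 v32 v33) v34)" by (metis la_f472 la_f207)
lemma la_f541: "(m v10 (m v12 v10 v9) v11) = (m v12 v10 (m v10 v9 v11))" by (metis la_f29 s1)
lemma la_f546: "(m v32 v30 (m v31 v29 v30)) = (m v30 (m v32 v30 v29) v31)" by (metis la_f29 la_f10)
lemma la_f563: "(m v21 v20 (m v22 v21 v23)) = (m v21 (m v20 v21 v22) v23)" by (metis la_f29 s1)
lemma la_f640: "(m v22 (m v21 v23 v22) v24) = (m v21 v22 (m v22 v21 (m v23 v22 v24)))" by (metis la_f495 la_f563)
lemma la_f649: "(m v22 (m v21 v23 v22) v24) = (m v22 v21 (m v23 v22 v24))" by (metis la_f640 la_f142)
lemma la_f726: "(m (m v53 v54 v55) v56 v54) = (m v56 v54 (m v53 v54 (m v55 v54 v56)))" by (metis la_f426 asc)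
lemma la_f735: "(m v28 v26 v27) = (m v27 (m v28 v27 v26) v26)" by (metis la_f426 la_f10)
lemma la_f736: "(m v39 v38 (m v40 v38 (m v41 (m v39 v38 v40) v38))) = (m v41 v38 (m v39 v38 v40))" by (metis la_f426 la_f29)
lemma la_f767: "(m v56 v54 (m v53 v54 (m v55 v54 v56))) = (m v54 (m v53 v54 v55) v56)" by (metis la_f726 la_f10)
lemma la_f768: "(m v56 v54 (m v53 v54 (m v55 v54 v56))) = (m v54 v53 (m v55 v54 v56))" by (metis la_f767 la_f563)
lemma la_f772: "(m v41 v38 (m v39 v38 v40)) = (m v39 v38 (m v40 v38 (m v41 v38 (m v39 v38 v40))))" by (metis la_f736 s2)
lemma la_f773: "(m v41 v38 (m v39 v38 v40)) = (m v39 v38 (m v38 v41 (m v39 v38 v40)))" by (metis la_f772 la_f768)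
lemma la_f1629: "(m v44 (m v41 v42 v43) v42) = (m v42 v41 (m v43 v42 v44))" by (metis la_f78 s1)
lemma la_f12097: "(m v17 v16 (m v18 v16 v19)) = (m v17 v16 (m v16 v18 v19))" by (metis la_f541 la_f29)
lemma la_f16221: "(m v223 (m v224 v223 v225) (m v226 v225 (m v224 v223 v225))) = (m (m v224 v223 v225) (m v224 v225 v223) v226)" by (metis la_f546 la_f735)
lemma la_f16720: "(m v224 v225 v223) = (m v223 (m v224 v223 v225) (m v226 v225 (m v224 v223 v225)))" by (metis la_f16221 la_f496)
lemma la_f21112: "(m v18 (m v19 v18 v20) (m v17 (m v19 v18 v20) v20)) = (m v18 v20 (m (m v19 v18 v20) v20 (m v17 v18 v19)))" by (metis la_f208 la_f368)
lemma la_f21588: "(m v18 (m v19 v18 v20) (m v17 (m v19 v18 v20) v20)) = (m v18 v20 (m v20 (m v19 v18 v20) (m v17 v18 v19)))" by (metis la_f21112 la_f12097)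
lemma la_f21589: "(m v18 (m v19 v18 v20) (m v17 (m v19 v18 v20) v20)) = (m v18 v20 (m v20 v19 (m v18 v20 (m v17 v18 v19))))" by (metis la_f21588 la_f649)
lemma la_f21590: "(m v18 (m v19 v18 v20) (m v17 (m v19 v18 v20) v20)) = (m v19 v20 (m v18 v20 (m v17 v18 v19)))" by (metis la_f21589 la_f773)
lemma la_f21591: "(m v19 v20 (m v18 v20 (m v17 v18 v19))) = (m v18 (m v19 v18 v20) (m v17 v20 (m v19 v18 v20)))" by (metis la_f21590 s2)
lemma la_f21592: "(m v19 v20 v18) = (m v19 v20 (m v18 v20 (m v17 v18 v19)))" by (metis la_f21591 la_f16720)
lemma la_f258644: "(m v444 v442 v441) = (m v444 v442 (m v444 (m v442 v441 v443) v441))" by (metis la_f21592 la_f1629)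
lemma la_f259147: "(m v444 v442 v441) = (m v444 v442 (m v444 v441 (m v442 v441 v443)))" by (metis la_f258644 s2)
lemma La: "m (m x b y) b (m x y z) = m x b y"
  by (metis la_f259147 s1 s2 la_f105 la_f29)
lemma lb_f21: "(m v9 v8 v10) = (m v8 v10 v9)" by (metis s2 s1)
lemma lb_f42: "(m (m v4 v5 v6) v7 v5) = (m v4 v5 (m v6 v5 v7))" by (metis asc s2)
lemma lb_f44: "(m v13 (m v12 v13 v14) v15) = (m v12 v13 (m v14 v13 v15))" by (metis asc s1)
lemma lb_f94: "(m v4 v5 v6) = (m v4 v5 (m v6 v5 (m v4 v6 v7)))" by (metis La asc)
lemma lb_f104: "(m (m v20 v21 v22) v21 (m (m v20 v22 v23) v21 v24)) = (m (m v20 v21 v22) v21 v24)" by (metis asc La)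
lemma lb_f110: "(m (m v20 v21 v22) v21 (m (m v20 v22 v23) v21 v24)) = (m v21 (m v20 v21 v22) v24)" by (metis lb_f104 s1)
lemma lb_f154: "(m v10 v12 v11) = (m v11 v12 v10)" by (metis lb_f21 s2)
lemma lb_f441: "(m v26 v27 (m v28 v27 v29)) = (m v29 v27 (m v26 v27 v28))" by (metis lb_f42 lb_f21)
lemma lb_f578: "(m (m v12 v11 v13) v10 v11) = (m v11 (m v10 v11 v12) v13)" by (metis lb_f44 lb_f21)
lemma lb_f649: "(m v11 v10 (m v12 v11 v13)) = (m v11 (m v10 v11 v12) v13)" by (metis lb_f578 lb_f154)
lemma lb_f651: "(m (m v20 v21 v22) v21 (m (m v20 v22 v23) v21 v24)) = (m v21 v20 (m v22 v21 v24))" by (metis lb_f110 lb_f649)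
lemma lb_f1442: "(m v18 v17 v16) = (m v18 v17 (m v17 (m v18 v16 v19) v16))" by (metis lb_f94 lb_f21)
lemma lb_f1510: "(m v18 v17 v16) = (m v18 v17 (m v17 v16 (m v18 v16 v19)))" by (metis lb_f1442 s2)
lemma Lb: assumes h1: "m h b x = b" and h2: "m h b y = b" shows "m h b (m x y z) = b"
proof -
  have lb_f12: "b = (m b h x)" by (metis s1 h1)
  have lb_f13: "b = (m b h y)" by (metis s1 h2)
  have lb_f41: "\<And>v27. (m b h (m y h v27)) = (m b h v27)" by (metis asc lb_f13)
  have lb_f58: "\<And>v27. (m b h v27) = (m b h (m h y v27))" by (metis lb_f41 s1)
  have lb_f80: "\<And>v34. b = (m b h (m b x v34))" by (metis La lb_f12)
  have lb_f312: "\<And>v6 v5. (m b h v6) = (m b h (m (m b x v5) h v6))" by (metis asc lb_f80)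
  have lb_f316: "\<And>v6 v5. (m b h v6) = (m b h (m h (m b x v5) v6))" by (metis lb_f312 s1)
  have lb_f2404: "\<And>v188 v187. (m h b (m x h v188)) = (m b h (m (m b x v187) h v188))" by (metis lb_f651 lb_f12)
  have lb_f2686: "\<And>v188 v187. (m h b (m x h v188)) = (m b h (m h (m b x v187) v188))" by (metis lb_f2404 s1)
  have lb_f2687: "\<And>v188. (m h b (m x h v188)) = (m b h v188)" by (metis lb_f2686 lb_f316)
  have lb_f2688: "\<And>v188. (m b h v188) = (m h b (m h x v188))" by (metis lb_f2687 s1)
  have lb_f81054: "\<And>v341 v340. (m h b (m h x v340)) = (m b h (m x v340 (m h v340 v341)))" by (metis lb_f2688 lb_f1510)
  have lb_f81290: "\<And>v341 v340. (m h b (m h x v340)) = (m b h (m h v340 (m v341 v340 x)))" by (metis lb_f81054 lb_f441)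
  have lb_f81291: "\<And>v341 v340. (m b h v340) = (m b h (m h v340 (m v341 v340 x)))" by (metis lb_f81290 lb_f2688)
  have lb_f808308: "\<And>v7. (m b h y) = (m b h (m v7 y x))" by (metis lb_f81291 lb_f58)
  have lb_f808583: "\<And>v7. (m b h y) = (m b h (m v7 x y))" by (metis lb_f808308 s2)
  have lb_f808584: "\<And>v7. b = (m b h (m v7 x y))" by (metis lb_f808583 lb_f13)
  have lb_f810257: "\<And>v4. b = (m b h (m x y v4))" by (metis lb_f808584 lb_f21)
  show ?thesis by (metis lb_f810257 s1)
qed

lemma rot: "m y z x = m x y z" by (metis s1 s2)
lemma wcomm: "m x b y = m y b x" by (metis s1 s2)
lemma widem: "m x b x = x" by (metis maj s2)
lemma wbot: "m x b b = b" by (metis maj s1 s2)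

definition filt :: "'a \<Rightarrow> 'a set \<Rightarrow> bool" where
  "filt b F \<longleftrightarrow> (\<forall>x\<in>F. \<forall>y. m x b y = x \<longrightarrow> y \<in> F) \<and> (\<forall>x\<in>F. \<forall>y\<in>F. m x b y \<in> F)"

lemma maximal_filter:
  assumes "a \<noteq> b"
  shows "\<exists>M. filt b M \<and> a \<in> M \<and> b \<notin> M \<and> (\<forall>X. filt b X \<and> b \<notin> X \<and> M \<subseteq> X \<longrightarrow> X = M)"
proof -
  let ?A = "{F. filt b F \<and> a \<in> F \<and> b \<notin> F}"
  have ne: "{y. m a b y = a} \<in> ?A"
  proof -
    have "filt b {y. m a b y = a}"
      unfolding filt_def by (auto, metis asc, metis asc)
    moreover have "m a b a = a" by (rule widem)
    moreover have "m a b b \<noteq> a" using assms wbot by metis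
    ultimately show ?thesis by auto
  qed
  have "\<exists>M\<in>?A. \<forall>X\<in>?A. M \<subseteq> X \<longrightarrow> X = M"
  proof (rule subset_Zorn_nonempty)
    show "?A \<noteq> {}" using ne by blast
  next
    fix C assume C: "C \<noteq> {}" "subset.chain ?A C"
    then have sub: "C \<subseteq> ?A" and ch: "\<forall>X\<in>C. \<forall>Y\<in>C. X \<subseteq> Y \<or> Y \<subseteq> X"
      by (auto simp: subset_chain_def)
    have "filt b (\<Union>C)"
      unfolding filt_def
    proof (intro conjI ballI allI impI)
      fix x y assume "x \<in> \<Union>C" "m x b y = x"
      then obtain F where "F \<in> C" "x \<in> F" by blast
      then show "y \<in> \<Union>C" using sub \<open>m x b y = x\<close> unfolding filt_def by blast
    next
      fix x y assume "x \<in> \<Union>C" "y \<in> \<Union>C"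
      then obtain F G where FG: "F \<in> C" "x \<in> F" "G \<in> C" "y \<in> G" by blast
      then have "F \<subseteq> G \<or> G \<subseteq> F" using ch by blast
      then show "m x b y \<in> \<Union>C"
      proof
        assume "F \<subseteq> G" then show ?thesis using FG sub unfolding filt_def by blast
      next
        assume "G \<subseteq> F" then show ?thesis using FG sub unfolding filt_def by blast
      qed
    qed
    then show "\<Union>C \<in> ?A" using C sub by auto
  qed
  then obtain M where "M \<in> ?A" "\<forall>X\<in>?A. M \<subseteq> X \<longrightarrow> X = M" by blast
  then show ?thesis by blast
qed

lemma separation:
  assumes "a \<noteq> b"
  shows "\<exists>M. a \<in> M \<and> b \<notin> M \<and> (\<forall>x y z. x \<in> M \<longrightarrow> y \<in> M \<longrightarrow> m x y z \<in> M)
            \<and> (\<forall>x y z. x \<notin> M \<longrightarrow> y \<notin> M \<longrightarrow> m x y z \<notin> M)"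
proof -
  obtain M where M: "filt b M" "a \<in> M" "b \<notin> M"
    and max: "\<And>X. filt b X \<Longrightarrow> b \<notin> X \<Longrightarrow> M \<subseteq> X \<Longrightarrow> X = M"
    using maximal_filter[OF assms] by blast
  have up: "\<And>x y. x \<in> M \<Longrightarrow> m x b y = x \<Longrightarrow> y \<in> M" and mc: "\<And>x y. x \<in> M \<Longrightarrow> y \<in> M \<Longrightarrow> m x b y \<in> M"
    using M(1) unfolding filt_def by blast+
  have key: "\<exists>f\<in>M. m f b x = b" if x: "x \<notin> M" for x
  proof (rule ccontr)
    assume nf: "\<not> (\<exists>f\<in>M. m f b x = b)"
    let ?G = "{u. \<exists>f\<in>M. m (m f b x) b u = m f b x}"
    have "filt b ?G"
      unfolding filt_def
    proof (intro conjI ballI allI impI)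
      fix u v assume "u \<in> ?G" "m u b v = u"
      then obtain f where f: "f \<in> M" "m (m f b x) b u = m f b x" by blast
      have "m (m f b x) b v = m (m (m f b x) b u) b v" using f by simp
      also have "\<dots> = m (m f b x) b (m u b v)" by (rule asc)
      also have "\<dots> = m f b x" using f \<open>m u b v = u\<close> by simp
      finally show "v \<in> ?G" using f by blast
    next
      fix u v assume "u \<in> ?G" "v \<in> ?G"
      then obtain f g where f: "f \<in> M" "m (m f b x) b u = m f b x"
        and g: "g \<in> M" "m (m g b x) b v = m g b x" by blast
      have e1: "m (m f b g) b x = m (m f b x) b (m g b x)"
        by (metis asc wcomm widem)
      have "m (m (m f b g) b x) b (m u b v) = m (m (m f b x) b u) b (m (m g b x) b v)"
        unfolding e1 by (metis asc wcomm)
      also have "\<dots> = m (m f b g) b x" using f g e1 by simp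
      finally show "m u b v \<in> ?G" using mc[OF f(1) g(1)] by blast
    qed
    moreover have "M \<subseteq> ?G"
    proof
      fix f assume "f \<in> M"
      moreover have "m (m f b x) b f = m f b x" by (metis asc wcomm widem)
      ultimately show "f \<in> ?G" by blast
    qed
    moreover have "x \<in> ?G"
    proof -
      have "m (m a b x) b x = m a b x" by (metis asc widem)
      then show ?thesis using M(2) by blast
    qed
    moreover have "b \<notin> ?G"
    proof
      assume "b \<in> ?G"
      then obtain f where "f \<in> M" "m (m f b x) b b = m f b x" by blast
      then show False using nf wbot by metis
    qed
    ultimately have "?G = M" using max by blast
    then show False using \<open>x \<in> ?G\<close> x by blast
  qed
  show ?thesis
  proof (intro exI conjI allI impI)
    show "a \<in> M" "b \<notin> M" by fact+
  next
    fix x y z assume "x \<in> M" "y \<in> M"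
    then have "m x b y \<in> M" by (rule mc)
    then show "m x y z \<in> M" using up La by blast
  next
    fix x y z assume x: "x \<notin> M" and y: "y \<notin> M"
    obtain f where f: "f \<in> M" "m f b x = b" using key[OF x] by blast
    obtain g where g: "g \<in> M" "m g b y = b" using key[OF y] by blast
    have h: "m f b g \<in> M" using mc f g by blast
    have hx: "m (m f b g) b x = b" by (metis asc wcomm f(2) wbot)
    have hy: "m (m f b g) b y = b" by (metis asc g(2) wbot)
    have "m (m f b g) b (m x y z) = b" using Lb[OF hx hy] .
    show "m x y z \<notin> M"
    proof
      assume "m x y z \<in> M"
      then have "m (m f b g) b (m x y z) \<in> M" using mc h by blast
      then show False using \<open>m (m f b g) b (m x y z) = b\<close> M(3) by simp
    qed
  qed
qed

end


datatype trm = V nat | M trm trm trm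

inductive eqv :: "trm \<Rightarrow> trm \<Rightarrow> bool" where
  erefl: "eqv t t"
| esym: "eqv t s \<Longrightarrow> eqv s t"
| etrans: "eqv t s \<Longrightarrow> eqv s u \<Longrightarrow> eqv t u"
| econg: "eqv t t' \<Longrightarrow> eqv u u' \<Longrightarrow> eqv v v' \<Longrightarrow> eqv (M t u v) (M t' u' v')"
| emaj: "eqv (M a a b) a"
| es1: "eqv (M a b c) (M b a c)"
| es2: "eqv (M a b c) (M a c b)"
| easc: "eqv (M (M a b c) b d) (M a b (M c b d))"

lemma equivp_eqv: "equivp eqv"
proof (rule equivpI)
  show "reflp eqv" unfolding reflp_def by (blast intro: erefl)
  show "symp eqv" unfolding symp_def by (blast intro: esym)
  show "transp eqv" unfolding transp_def by (blast intro: etrans)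
qed

quotient_type fm = trm / eqv
  by (rule equivp_eqv)

lift_definition medF :: "fm \<Rightarrow> fm \<Rightarrow> fm \<Rightarrow> fm" is M
  by (rule econg)

interpretation F: med medF
proof unfold_locales
  show "medF a a b = a" for a b by transfer (rule emaj)
  show "medF a b c = medF b a c" for a b c by transfer (rule es1)
  show "medF a b c = medF a c b" for a b c by transfer (rule es2)
  show "medF (medF a b c) b d = medF a b (medF c b d)" for a b c d by transfer (rule easc)
qed

fun beval :: "(nat \<Rightarrow> bool) \<Rightarrow> trm \<Rightarrow> bool" where
  "beval \<beta> (V i) = \<beta> i"
| "beval \<beta> (M a b c) = ((beval \<beta> a \<and> beval \<beta> b) \<or> (beval \<beta> b \<and> beval \<beta> c) \<or> (beval \<beta> a \<and> beval \<beta> c))"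

lemma completeness:
  assumes "\<And>\<beta>. beval \<beta> t = beval \<beta> s"
  shows "eqv t s"
proof (rule ccontr)
  assume ne: "\<not> eqv t s"
  have "abs_fm t \<noteq> abs_fm s" using ne by (simp add: fm.abs_eq_iff)
  from F.separation[OF this] obtain H where H: "abs_fm t \<in> H" "abs_fm s \<notin> H"
    and c1: "\<And>x y z. x \<in> H \<Longrightarrow> y \<in> H \<Longrightarrow> medF x y z \<in> H"
    and c2: "\<And>x y z. x \<notin> H \<Longrightarrow> y \<notin> H \<Longrightarrow> medF x y z \<notin> H"
    by blast
  have hom: "(medF x y z \<in> H) = ((x \<in> H \<and> y \<in> H) \<or> (y \<in> H \<and> z \<in> H) \<or> (x \<in> H \<and> z \<in> H))" for x y z
  proof -
    have a0: "x \<in> H \<and> y \<in> H \<longrightarrow> medF x y z \<in> H" using c1 by blast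
    have a1: "x \<in> H \<and> z \<in> H \<longrightarrow> medF x y z \<in> H" using c1[of x z y] F.s2[of x z y] by simp
    have a2: "y \<in> H \<and> z \<in> H \<longrightarrow> medF x y z \<in> H" using c1[of y z x] F.rot[of y z x] by simp
    have b0: "x \<notin> H \<and> y \<notin> H \<longrightarrow> medF x y z \<notin> H" using c2 by blast
    have b1: "x \<notin> H \<and> z \<notin> H \<longrightarrow> medF x y z \<notin> H" using c2[of x z y] F.s2[of x z y] by simp
    have b2: "y \<notin> H \<and> z \<notin> H \<longrightarrow> medF x y z \<notin> H" using c2[of y z x] F.rot[of y z x] by simp
    show ?thesis using a0 a1 a2 b0 b1 b2 by argo
  qed
  have ev: "(abs_fm r \<in> H) = beval (\<lambda>i. abs_fm (V i) \<in> H) r" for r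
  proof (induction r)
    case (V i) then show ?case by simp
  next
    case (M a b c)
    have "abs_fm (M a b c) = medF (abs_fm a) (abs_fm b) (abs_fm c)"
      by (simp add: medF.abs_eq)
    then show ?case using M hom by simp
  qed
  have "beval (\<lambda>i. abs_fm (V i) \<in> H) t" using H(1) ev by blast
  moreover have "\<not> beval (\<lambda>i. abs_fm (V i) \<in> H) s" using H(2) ev by blast
  ultimately show False using assms by blast
qed



fun eval :: "('a \<Rightarrow> 'a \<Rightarrow> 'a \<Rightarrow> 'a) \<Rightarrow> (nat \<Rightarrow> 'a) \<Rightarrow> trm \<Rightarrow> 'a" where
  "eval \<mu> g (V i) = g i"
| "eval \<mu> g (M a b c) = \<mu> (eval \<mu> g a) (eval \<mu> g b) (eval \<mu> g c)"

lemma C0'_perms: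
  fixes \<mu> :: "'a::metric_space \<Rightarrow> 'a \<Rightarrow> 'a \<Rightarrow> 'a"
  assumes "C0' \<mu>"
  shows "\<exists>k\<ge>0. (\<forall>a b. dist (\<mu> a a b) a \<le> k) \<and> (\<forall>a b c. dist (\<mu> b a c) (\<mu> a b c) \<le> k)
     \<and> (\<forall>a b c. dist (\<mu> c b a) (\<mu> a b c) \<le> k) \<and> (\<forall>a b c. dist (\<mu> a c b) (\<mu> a b c) \<le> k)"
proof -
  obtain k where k1: "\<And>a1 a2. dist (\<mu> a1 a1 a2) a1 \<le> k"
    and k2: "\<And>(a::nat \<Rightarrow> 'a) \<sigma>. \<sigma> permutes {1,2,3} \<Longrightarrow>
        dist (\<mu> (a (\<sigma> 1)) (a (\<sigma> 2)) (a (\<sigma> 3))) (\<mu> (a 1) (a 2) (a 3)) \<le> k"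
    using assms unfolding C0'_def by blast
  have "k \<ge> 0" using k1[of undefined undefined] zero_le_dist order_trans by blast
  moreover have "dist (\<mu> b a c) (\<mu> a b c) \<le> k" for a b c
    using k2[of "Transposition.transpose 1 2" "\<lambda>i. if i = 1 then a else if i = 2 then b else c"]
    by (simp add: permutes_swap_id)
  moreover have "dist (\<mu> c b a) (\<mu> a b c) \<le> k" for a b c
    using k2[of "Transposition.transpose 1 3" "\<lambda>i. if i = 1 then a else if i = 2 then b else c"]
    by (simp add: permutes_swap_id)
  moreover have "dist (\<mu> a c b) (\<mu> a b c) \<le> k" for a b c
    using k2[of "Transposition.transpose 2 3" "\<lambda>i. if i = 1 then a else if i = 2 then b else c"]
    by (simp add: permutes_swap_id)
  ultimately show ?thesis using k1 by blast
qed

lemma C1_of: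
  fixes \<mu> :: "'a::metric_space \<Rightarrow> 'a \<Rightarrow> 'a \<Rightarrow> 'a"
  assumes "C0' \<mu>" "C1' \<mu>"
  shows "\<exists>K H. K \<ge> 0 \<and> H \<ge> 0 \<and> (\<forall>a b c a' b' c'.
      dist (\<mu> a b c) (\<mu> a' b' c') \<le> K * (dist a a' + dist b b' + dist c c') + H)"
proof -
  obtain k where k: "k \<ge> 0" "\<And>a b c. dist (\<mu> b a c) (\<mu> a b c) \<le> k"
      "\<And>a b c. dist (\<mu> c b a) (\<mu> a b c) \<le> k"
    using C0'_perms[OF assms(1)] by blast
  obtain K H where KH: "K \<ge> 0" "H \<ge> 0" "\<And>a a' b c. dist (\<mu> a b c) (\<mu> a' b c) \<le> K * dist a a' + H"
    using assms(2) unfolding C1'_def by blast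
  have kh: "\<And>x y u v. dist (\<mu> x u v) (\<mu> y u v) \<le> K * dist x y + H" using KH(3) by blast
  have "dist (\<mu> a b c) (\<mu> a' b' c') \<le> K * (dist a a' + dist b b' + dist c c') + (3 * H + 4 * k)" for a b c a' b' c'
  proof -
    have t1: "dist (\<mu> a b c) (\<mu> a' b c) \<le> K * dist a a' + H" by (rule KH(3))
    have t2: "dist (\<mu> a' b c) (\<mu> a' b' c) \<le> K * dist b b' + H + 2 * k"
    proof -
      have "dist (\<mu> a' b c) (\<mu> a' b' c) \<le> dist (\<mu> a' b c) (\<mu> b a' c) + dist (\<mu> b a' c) (\<mu> a' b' c)"
        by (rule dist_triangle)
      also have "\<dots> \<le> dist (\<mu> a' b c) (\<mu> b a' c) + (dist (\<mu> b a' c) (\<mu> b' a' c) + dist (\<mu> b' a' c) (\<mu> a' b' c))"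
        using dist_triangle by (simp add: add_left_mono)
      also have "\<dots> \<le> k + (K * dist b b' + H + k)"
        using k(2)[of b a' c] k(2)[of a' b' c] kh[where x=b and y=b' and u=a' and v=c] by (simp add: dist_commute)
      finally show ?thesis by simp
    qed
    have t3: "dist (\<mu> a' b' c) (\<mu> a' b' c') \<le> K * dist c c' + H + 2 * k"
    proof -
      have "dist (\<mu> a' b' c) (\<mu> a' b' c') \<le> dist (\<mu> a' b' c) (\<mu> c b' a') + dist (\<mu> c b' a') (\<mu> a' b' c')"
        by (rule dist_triangle)
      also have "\<dots> \<le> dist (\<mu> a' b' c) (\<mu> c b' a') + (dist (\<mu> c b' a') (\<mu> c' b' a') + dist (\<mu> c' b' a') (\<mu> a' b' c'))"
        using dist_triangle by (simp add: add_left_mono)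
      also have "\<dots> \<le> k + (K * dist c c' + H + k)"
        using k(3)[of a' b' c] k(3)[of c' b' a'] kh[where x=c and y=c' and u=b' and v=a'] by (simp add: dist_commute)
      finally show ?thesis by simp
    qed
    have "dist (\<mu> a b c) (\<mu> a' b' c') \<le> dist (\<mu> a b c) (\<mu> a' b c) + dist (\<mu> a' b c) (\<mu> a' b' c) + dist (\<mu> a' b' c) (\<mu> a' b' c')"
      using dist_triangle[of "\<mu> a b c" "\<mu> a' b' c'" "\<mu> a' b c"] dist_triangle[of "\<mu> a' b c" "\<mu> a' b' c'" "\<mu> a' b' c"]
      by linarith
    moreover have "K * (dist a a' + dist b b' + dist c c') = K * dist a a' + K * dist b b' + K * dist c c'"
      by (simp add: distrib_left)
    ultimately show ?thesis using t1 t2 t3 by linarith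
  qed
  moreover have "3 * H + 4 * k \<ge> 0" using KH k by simp
  ultimately show ?thesis using KH(1) by blast
qed

lemma eqv_bound:
  fixes \<mu> :: "'a::metric_space \<Rightarrow> 'a \<Rightarrow> 'a \<Rightarrow> 'a"
  assumes "C0' \<mu>" "C1' \<mu>" "C2' \<mu>" and "eqv t s"
  shows "\<exists>C. \<forall>g. dist (eval \<mu> g t) (eval \<mu> g s) \<le> C"
  using assms(4)
proof (induction rule: eqv.induct)
  case (erefl t) then show ?case by (intro exI[of _ 0]) simp
next
  case (esym t s) then show ?case by (simp add: dist_commute)
next
  case (etrans t s u)
  then obtain C1 C2 where "\<And>g. dist (eval \<mu> g t) (eval \<mu> g s) \<le> C1" "\<And>g. dist (eval \<mu> g s) (eval \<mu> g u) \<le> C2"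
    by blast
  then have "dist (eval \<mu> g t) (eval \<mu> g u) \<le> C1 + C2" for g
    by (meson add_mono dist_triangle order_trans)
  then show ?case by blast
next
  case (econg t t' u u' v v')
  obtain K H where KH: "\<And>a b c a' b' c'. dist (\<mu> a b c) (\<mu> a' b' c') \<le> K * (dist a a' + dist b b' + dist c c') + H" "K \<ge> 0"
    using C1_of[OF assms(1,2)] by blast
  from econg.IH obtain C1 C2 C3 where c: "\<And>g. dist (eval \<mu> g t) (eval \<mu> g t') \<le> C1"
    "\<And>g. dist (eval \<mu> g u) (eval \<mu> g u') \<le> C2" "\<And>g. dist (eval \<mu> g v) (eval \<mu> g v') \<le> C3"
    by blast
  have "dist (eval \<mu> g (M t u v)) (eval \<mu> g (M t' u' v')) \<le> K * (C1 + C2 + C3) + H" for g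
  proof -
    have "K * (dist (eval \<mu> g t) (eval \<mu> g t') + dist (eval \<mu> g u) (eval \<mu> g u') + dist (eval \<mu> g v) (eval \<mu> g v'))
        \<le> K * (C1 + C2 + C3)"
      using c[of g] KH(2) by (intro mult_left_mono) auto
    then show ?thesis using KH(1)[of "eval \<mu> g t" "eval \<mu> g u" "eval \<mu> g v" "eval \<mu> g t'" "eval \<mu> g u'" "eval \<mu> g v'"]
      by simp
  qed
  then show ?case by blast
next
  case (emaj a b)
  obtain k where "\<And>a b. dist (\<mu> a a b) a \<le> k" using C0'_perms[OF assms(1)] by blast
  then show ?case by auto
next
  case (es1 a b c)
  obtain k where "\<And>a b c. dist (\<mu> b a c) (\<mu> a b c) \<le> k" using C0'_perms[OF assms(1)] by blast
  then show ?case by (auto simp: dist_commute)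
next
  case (es2 a b c)
  obtain k where "\<And>a b c. dist (\<mu> a c b) (\<mu> a b c) \<le> k" using C0'_perms[OF assms(1)] by blast
  then show ?case by (auto simp: dist_commute)
next
  case (easc a b c d)
  obtain k where "\<And>a b c d. dist (\<mu> (\<mu> a b c) b d) (\<mu> a b (\<mu> c b d)) \<le> k"
    using assms(3) unfolding C2'_def by blast
  then show ?case by (intro exI[of _ k] allI) simp
qed


fun vars :: "trm \<Rightarrow> nat set" where
  "vars (V i) = {i}"
| "vars (M a b c) = vars a \<union> vars b \<union> vars c"

lemma beval_restr: "vars t \<subseteq> {..<p} \<Longrightarrow> beval \<beta> t = beval (\<lambda>i. \<beta> i \<and> i < p) t"
  by (induction t) auto

lemma finite_bound:
  fixes f :: "'i \<Rightarrow> 'g \<Rightarrow> real"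
  assumes "finite I" "\<forall>i\<in>I. \<exists>C. \<forall>g. f i g \<le> C"
  shows "\<exists>C\<ge>0. \<forall>i\<in>I. \<forall>g. f i g \<le> C"
  using assms
proof (induction I rule: finite_induct)
  case empty then show ?case by auto
next
  case (insert x F)
  then obtain C where C: "C \<ge> 0" "\<forall>i\<in>F. \<forall>g. f i g \<le> C" by auto
  obtain D where D: "\<forall>g. f x g \<le> D" using insert.prems by auto
  show ?case
    by (rule exI[of _ "max C D"]) (use C D in \<open>fastforce simp: le_max_iff_disj\<close>)
qed

definition majS :: "'b set \<Rightarrow> 'b set \<Rightarrow> 'b set \<Rightarrow> 'b set" where
  "majS X Y Z = (X \<inter> Y) \<union> (Y \<inter> Z) \<union> (X \<inter> Z)"

lemma C2_of:
  fixes \<mu> :: "'a::metric_space \<Rightarrow> 'a \<Rightarrow> 'a \<Rightarrow> 'a"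
  assumes bound: "\<And>t s. eqv t s \<Longrightarrow> \<exists>C. \<forall>g. dist (eval \<mu> g t) (eval \<mu> g s) \<le> C"
  shows "C2 \<mu>"
proof -
  define G where "G p h \<longleftrightarrow> (\<forall>A. finite A \<and> 1 \<le> card A \<and> card A \<le> p \<longrightarrow>
        (\<exists>(P::nat set) m (\<pi>::'a \<Rightarrow> nat) (lam::nat \<Rightarrow> 'a).
           finite P \<and> median_algebra_on P m \<and> (\<forall>a\<in>A. \<pi> a \<in> P) \<and>
           (\<forall>x\<in>P. \<forall>y\<in>P. \<forall>z\<in>P. dist (lam (m x y z)) (\<mu> (lam x) (lam y) (lam z)) \<le> h) \<and>
           (\<forall>a\<in>A. dist (lam (\<pi> a)) a \<le> h)))" for p h
  have "\<exists>h\<ge>0. G p h" for p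
  proof -
    define T where "T = {t. vars t \<subseteq> {..<p}}"
    define B where "B = (\<lambda>X i. i \<in> X) ` Pow {..<p}"
    define S where "S t = {\<beta> \<in> B. beval \<beta> t}" for t
    define Q where "Q = S ` T"
    have finB: "finite B" unfolding B_def by simp
    have finQ: "finite Q"
    proof -
      have "Q \<subseteq> Pow B" unfolding Q_def S_def by auto
      then show ?thesis using finB finite_subset by blast
    qed
    have SM: "S (M t u v) = majS (S t) (S u) (S v)" for t u v
      unfolding S_def majS_def by auto
    have MT: "M t u v \<in> T" if "t \<in> T" "u \<in> T" "v \<in> T" for t u v
      using that unfolding T_def by auto
    have VT: "V i \<in> T" if "i < p" for i using that unfolding T_def by auto
    have Seq: "eqv t s" if "t \<in> T" "s \<in> T" "S t = S s" for t s
    proof (rule completeness)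
      fix \<beta>
      let ?b = "\<lambda>i. \<beta> i \<and> i < p"
      have b: "?b \<in> B" unfolding B_def
        by (rule image_eqI[of _ _ "{i. \<beta> i \<and> i < p}"]) auto
      have "beval ?b t = beval ?b s" using that b unfolding S_def by blast
      then show "beval \<beta> t = beval \<beta> s"
        using beval_restr[of t p \<beta>] beval_restr[of s p \<beta>] that unfolding T_def by simp
    qed
    have majSQ: "majS X Y Z \<in> Q" if "X \<in> Q" "Y \<in> Q" "Z \<in> Q" for X Y Z
    proof -
      from that obtain t where "t \<in> T" "X = S t" unfolding Q_def by (auto elim: imageE)
      moreover from that obtain u where "u \<in> T" "Y = S u" unfolding Q_def by (auto elim: imageE)
      moreover from that obtain v where "v \<in> T" "Z = S v" unfolding Q_def by (auto elim: imageE)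
      ultimately have "majS X Y Z = S (M t u v)" "M t u v \<in> T" using SM MT by auto
      then show ?thesis unfolding Q_def by blast
    qed
    have dummy: True
    by simp
    obtain e where e: "bij_betw e Q {0..<card Q}" using ex_bij_betw_finite_nat[OF finQ] by blast
    define d where "d = inv_into Q e"
    define P where "P = {0..<card Q}"
    have dQ: "d x \<in> Q" if "x \<in> P" for x
      using inv_into_into[of x e Q] bij_betw_imp_surj_on[OF e] that unfolding d_def P_def by simp
    have ed: "e (d x) = x" if "x \<in> P" for x
      using f_inv_into_f[of x e Q] bij_betw_imp_surj_on[OF e] that unfolding d_def P_def by simp
    have de: "d (e X) = X" if "X \<in> Q" for X
      using inv_into_f_f[OF bij_betw_imp_inj_on[OF e] that] unfolding d_def by simp
    have eP: "e X \<in> P" if "X \<in> Q" for X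
      using bij_betwE[OF e] that unfolding P_def by blast
    define mP where "mP x y z = e (majS (d x) (d y) (d z))" for x y z
    have mPP: "mP x y z \<in> P" if "x \<in> P" "y \<in> P" "z \<in> P" for x y z
      unfolding mP_def using that dQ majSQ eP by blast
    have dmP: "d (mP x y z) = majS (d x) (d y) (d z)" if "x \<in> P" "y \<in> P" "z \<in> P" for x y z
      unfolding mP_def using that dQ majSQ de by blast
    have m1: "mP a b c \<in> P" if "a \<in> P" "b \<in> P" "c \<in> P" for a b c using mPP that .
    have m2: "mP a a b = a" if ab: "a \<in> P" "b \<in> P" for a b
    proof -
      have "majS (d a) (d a) (d b) = d a" unfolding majS_def by auto
      then show "mP a a b = a" unfolding mP_def using ed ab by simp
    qed
    have m3: "mP a b c = mP b a c \<and> mP a b c = mP a c b" for a b c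
    proof -
      have "majS (d a) (d b) (d c) = majS (d b) (d a) (d c)" "majS (d a) (d b) (d c) = majS (d a) (d c) (d b)"
        unfolding majS_def by auto
      then show ?thesis unfolding mP_def by simp
    qed
    have m4: "mP (mP a b c) b d' = mP a b (mP c b d')" if abc: "a \<in> P" "b \<in> P" "c \<in> P" "d' \<in> P" for a b c d'
    proof -
      have "majS (majS (d a) (d b) (d c)) (d b) (d d') = majS (d a) (d b) (majS (d c) (d b) (d d'))"
        unfolding majS_def by auto
      then show ?thesis using dmP abc by (simp add: mP_def)
    qed
    have med: "median_algebra_on P mP"
      unfolding median_algebra_on_def using m1 m2 m3 m4 by blast
    define rep where "rep x = (SOME t. t \<in> T \<and> S t = d x)" for x
    have rep: "rep x \<in> T \<and> S (rep x) = d x" if "x \<in> P" for x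
    proof -
      have "\<exists>t. t \<in> T \<and> S t = d x" using dQ[OF that] unfolding Q_def by blast
      then show ?thesis unfolding rep_def by (rule someI_ex)
    qed
    define Tr where "Tr = P \<times> P \<times> P"
    have "\<forall>w\<in>Tr. \<exists>C. \<forall>g. dist (eval \<mu> g (case w of (x, y, z) \<Rightarrow> rep (mP x y z)))
          (eval \<mu> g (case w of (x, y, z) \<Rightarrow> M (rep x) (rep y) (rep z))) \<le> C"
    proof
      fix w assume "w \<in> Tr"
      then obtain x y z where w: "w = (x, y, z)" "x \<in> P" "y \<in> P" "z \<in> P" unfolding Tr_def by auto
      have "eqv (rep (mP x y z)) (M (rep x) (rep y) (rep z))"
      proof (rule Seq)
        show "rep (mP x y z) \<in> T" using rep mPP w by blast
        show "M (rep x) (rep y) (rep z) \<in> T" using rep w MT by blast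
        show "S (rep (mP x y z)) = S (M (rep x) (rep y) (rep z))"
          using rep mPP w dmP SM by simp
      qed
      then show "\<exists>C. \<forall>g. dist (eval \<mu> g (case w of (x, y, z) \<Rightarrow> rep (mP x y z)))
          (eval \<mu> g (case w of (x, y, z) \<Rightarrow> M (rep x) (rep y) (rep z))) \<le> C"
        using bound[OF \<open>eqv (rep (mP x y z)) (M (rep x) (rep y) (rep z))\<close>] w(1) by simp
    qed
    moreover have "finite Tr" unfolding Tr_def P_def by simp
    ultimately obtain C1 where C1a: "C1 \<ge> 0" and C1b: "\<forall>w\<in>Tr. \<forall>g. dist (eval \<mu> g (case w of (x, y, z) \<Rightarrow> rep (mP x y z)))
          (eval \<mu> g (case w of (x, y, z) \<Rightarrow> M (rep x) (rep y) (rep z))) \<le> C1"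
      using finite_bound[where I=Tr and f="\<lambda>w g. dist (eval \<mu> g (case w of (x, y, z) \<Rightarrow> rep (mP x y z)))
          (eval \<mu> g (case w of (x, y, z) \<Rightarrow> M (rep x) (rep y) (rep z)))"] by blast
    have C1: "C1 \<ge> 0" "\<And>x y z g. x \<in> P \<Longrightarrow> y \<in> P \<Longrightarrow> z \<in> P \<Longrightarrow>
        dist (eval \<mu> g (rep (mP x y z))) (eval \<mu> g (M (rep x) (rep y) (rep z))) \<le> C1"
    proof -
      show "C1 \<ge> 0" by fact
      fix x y z g assume "x \<in> P" "y \<in> P" "z \<in> P"
      then have "(x, y, z) \<in> Tr" unfolding Tr_def by simp
      then show "dist (eval \<mu> g (rep (mP x y z))) (eval \<mu> g (M (rep x) (rep y) (rep z))) \<le> C1"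
        using C1b by fastforce
    qed
    define gen where "gen i = e (S (V i))" for i
    have genP: "gen i \<in> P" if "i < p" for i
      unfolding gen_def using eP VT that unfolding Q_def by blast
    have "\<forall>i\<in>{..<p}. \<exists>C. \<forall>g. dist (eval \<mu> g (rep (gen i))) (eval \<mu> g (V i)) \<le> C"
    proof
      fix i assume "i \<in> {..<p}"
      then have i: "i < p" by simp
      have "eqv (rep (gen i)) (V i)"
      proof (rule Seq)
        show "rep (gen i) \<in> T" using rep genP i by blast
        show "V i \<in> T" using VT i .
        have "S (V i) \<in> Q" using VT i unfolding Q_def by blast
        then show "S (rep (gen i)) = S (V i)" using rep genP i de unfolding gen_def by simp
      qed
      then show "\<exists>C. \<forall>g. dist (eval \<mu> g (rep (gen i))) (eval \<mu> g (V i)) \<le> C" by (rule bound)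
    qed
    then obtain C2 where C2a: "C2 \<ge> 0" and C2b: "\<forall>i\<in>{..<p}. \<forall>g. dist (eval \<mu> g (rep (gen i))) (eval \<mu> g (V i)) \<le> C2"
      using finite_bound[where I="{..<p}" and f="\<lambda>i g. dist (eval \<mu> g (rep (gen i))) (eval \<mu> g (V i))"] by blast
    have C2: "C2 \<ge> 0" "\<And>i g. i < p \<Longrightarrow> dist (eval \<mu> g (rep (gen i))) (g i) \<le> C2"
      using C2a C2b by auto
    show ?thesis
      unfolding G_def
    proof (intro exI[of _ "max C1 C2"] conjI allI impI)
      show "0 \<le> max C1 C2" using C1 by simp
    next
      fix A :: "'a set" assume A: "finite A \<and> 1 \<le> card A \<and> card A \<le> p"
      obtain xs where xs: "set xs = A" "distinct xs" using finite_distinct_list A by blast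
      have len: "length xs \<le> p" using distinct_card[OF xs(2)] xs(1) A by simp
      define g where "g i = xs ! i" for i
      define idx where "idx a = (SOME i. i < p \<and> g i = a)" for a
      have idx: "idx a < p \<and> g (idx a) = a" if "a \<in> A" for a
      proof -
        have "a \<in> set xs" using that xs(1) by simp
        then obtain i where "i < length xs" "xs ! i = a" by (auto simp: in_set_conv_nth)
        then have "i < p \<and> g i = a" using len unfolding g_def by simp
        then have "\<exists>i. i < p \<and> g i = a" by blast
        then show ?thesis unfolding idx_def by (rule someI_ex)
      qed
      define \<pi> where "\<pi> a = gen (idx a)" for a
      define lam where "lam x = eval \<mu> g (rep x)" for x
      show "\<exists>(P::nat set) m (\<pi>::'a \<Rightarrow> nat) (lam::nat \<Rightarrow> 'a).
           finite P \<and> median_algebra_on P m \<and> (\<forall>a\<in>A. \<pi> a \<in> P) \<and>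
           (\<forall>x\<in>P. \<forall>y\<in>P. \<forall>z\<in>P. dist (lam (m x y z)) (\<mu> (lam x) (lam y) (lam z)) \<le> max C1 C2) \<and>
           (\<forall>a\<in>A. dist (lam (\<pi> a)) a \<le> max C1 C2)"
      proof (rule exI[of _ P], rule exI[of _ mP], rule exI[of _ \<pi>], rule exI[of _ lam], intro conjI ballI)
        show "finite P" unfolding P_def by simp
        show "median_algebra_on P mP" by (rule med)
      next
        fix a assume "a \<in> A" then show "\<pi> a \<in> P" using idx genP unfolding \<pi>_def by blast
      next
        fix x y z assume "x \<in> P" "y \<in> P" "z \<in> P"
        then have "dist (lam (mP x y z)) (\<mu> (lam x) (lam y) (lam z)) \<le> C1"
          using C1(2)[of x y z g] unfolding lam_def by simp
        then show "dist (lam (mP x y z)) (\<mu> (lam x) (lam y) (lam z)) \<le> max C1 C2" by simp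
      next
        fix a assume "a \<in> A"
        then have "dist (lam (\<pi> a)) a \<le> C2"
          using C2(2)[of "idx a" g] idx unfolding lam_def \<pi>_def by simp
        then show "dist (lam (\<pi> a)) a \<le> max C1 C2" by simp
      qed
    qed
  qed
  then have "\<forall>p. \<exists>h. 0 \<le> h \<and> G p h" by blast
  from choice[OF this] obtain H where H: "\<forall>p. 0 \<le> H p \<and> G p (H p)" by blast
  have eq: "C2 \<mu> \<longleftrightarrow> (\<exists>H. (\<forall>p. H p \<ge> 0) \<and> (\<forall>p. G p (H p)))"
    unfolding C2_def G_def by simp
  show ?thesis unfolding eq using H by blast
qed


lemma C1_get:
  fixes \<mu> :: "'a::metric_space \<Rightarrow> 'a \<Rightarrow> 'a \<Rightarrow> 'a"
  assumes "C1 \<mu>"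
  shows "\<exists>H0 K. H0 \<ge> 0 \<and> K \<ge> 0 \<and>
    (\<forall>a b c a' b' c'. dist (\<mu> a b c) (\<mu> a' b' c') \<le> K * (dist a a' + dist b b' + dist c c') + H0)"
proof -
  obtain K H0 where KH: "\<And>a b c a' b' c'. dist (\<mu> a b c) (\<mu> a' b' c') \<le> K * (dist a a' + dist b b' + dist c c') + H0"
    using assms unfolding C1_def by blast
  have "H0 \<ge> 0" using KH[of undefined undefined undefined undefined undefined undefined] by simp
  moreover have "dist (\<mu> a b c) (\<mu> a' b' c') \<le> \<bar>K\<bar> * (dist a a' + dist b b' + dist c c') + H0" for a b c a' b' c'
  proof -
    have "K * (dist a a' + dist b b' + dist c c') \<le> \<bar>K\<bar> * (dist a a' + dist b b' + dist c c')"
      by (intro mult_right_mono) auto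
    then show ?thesis using KH[of a b c a' b' c'] by linarith
  qed
  ultimately show ?thesis by (intro exI[of _ H0] exI[of _ "\<bar>K\<bar>"]) simp
qed

lemma approx3:
  fixes \<mu> :: "'a::metric_space \<Rightarrow> 'a \<Rightarrow> 'a \<Rightarrow> 'a"
  assumes KH: "\<And>a b c a' b' c'. dist (\<mu> a b c) (\<mu> a' b' c') \<le> K * (dist a a' + dist b b' + dist c c') + H0"
    and K: "K \<ge> 0"
    and "dist u1 v1 \<le> h" "dist u2 v2 \<le> h" "dist u3 v3 \<le> h"
  shows "dist (\<mu> u1 u2 u3) (\<mu> v1 v2 v3) \<le> K * (3 * h) + H0"
proof -
  have "K * (dist u1 v1 + dist u2 v2 + dist u3 v3) \<le> K * (3 * h)"
    using assms(3-5) K by (intro mult_left_mono) auto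
  then show ?thesis using KH[of u1 u2 u3 v1 v2 v3] by linarith
qed

lemma perm3_cases:
  assumes "\<sigma> permutes {1,2,3::nat}"
  shows "(\<sigma> 1 = 1 \<and> \<sigma> 2 = 2 \<and> \<sigma> 3 = 3) \<or> (\<sigma> 1 = 1 \<and> \<sigma> 2 = 3 \<and> \<sigma> 3 = 2) \<or>
         (\<sigma> 1 = 2 \<and> \<sigma> 2 = 1 \<and> \<sigma> 3 = 3) \<or> (\<sigma> 1 = 2 \<and> \<sigma> 2 = 3 \<and> \<sigma> 3 = 1) \<or>
         (\<sigma> 1 = 3 \<and> \<sigma> 2 = 1 \<and> \<sigma> 3 = 2) \<or> (\<sigma> 1 = 3 \<and> \<sigma> 2 = 2 \<and> \<sigma> 3 = 1)"
proof -
  have i: "inj \<sigma>" using permutes_inj[OF assms] .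
  have d: "\<sigma> 1 \<noteq> \<sigma> 2" "\<sigma> 1 \<noteq> \<sigma> 3" "\<sigma> 2 \<noteq> \<sigma> 3"
    using inj_eq[OF i, of 1 2] inj_eq[OF i, of 1 3] inj_eq[OF i, of 2 3] by simp_all
  have "\<sigma> 1 \<in> {1,2,3}" "\<sigma> 2 \<in> {1,2,3}" "\<sigma> 3 \<in> {1,2,3}"
    using permutes_in_image[OF assms, of 1] permutes_in_image[OF assms, of 2] permutes_in_image[OF assms, of 3] by simp_all
  then have "\<sigma> 1 = 1 \<or> \<sigma> 1 = 2 \<or> \<sigma> 1 = 3" "\<sigma> 2 = 1 \<or> \<sigma> 2 = 2 \<or> \<sigma> 2 = 3" "\<sigma> 3 = 1 \<or> \<sigma> 3 = 2 \<or> \<sigma> 3 = 3"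
    by simp_all
  then show ?thesis using d by (elim disjE) simp_all
qed

lemma med_perm:
  assumes "median_algebra_on P m" "x \<in> P" "y \<in> P" "z \<in> P"
  shows "m y x z = m x y z" "m x z y = m x y z" "m z y x = m x y z" "m y z x = m x y z" "m z x y = m x y z"
proof -
  have s: "\<And>a b c. a \<in> P \<Longrightarrow> b \<in> P \<Longrightarrow> c \<in> P \<Longrightarrow> m a b c = m b a c \<and> m a b c = m a c b"
    using assms(1) unfolding median_algebra_on_def by blast
  show "m y x z = m x y z" using s[of x y z] assms by simp
  show "m x z y = m x y z" using s[of x y z] assms by metis
  show "m z y x = m x y z" using s[of x y z] s[of y x z] s[of y z x] assms by metis
  show "m y z x = m x y z" using s[of x y z] s[of y x z] assms by metis
  show "m z x y = m x y z" using s[of x y z] s[of x z y] s[of z x y] assms by metis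
qed

lemma forward:
  fixes \<mu> :: "'a::metric_space \<Rightarrow> 'a \<Rightarrow> 'a \<Rightarrow> 'a"
  assumes c1: "C1 \<mu>" and c2: "C2 \<mu>"
  shows "C0' \<mu> \<and> C1' \<mu> \<and> C2' \<mu>"
proof -
  obtain H0 K where H0: "H0 \<ge> 0" and K: "K \<ge> 0"
    and KHa: "\<forall>a b c a' b' c'. dist (\<mu> a b c) (\<mu> a' b' c') \<le> K * (dist a a' + dist b b' + dist c c') + H0"
    using C1_get[OF c1] by blast
  have KH: "\<And>a b c a' b' c'. dist (\<mu> a b c) (\<mu> a' b' c') \<le> K * (dist a a' + dist b b' + dist c c') + H0"
    using KHa by blast
  from c2 obtain H where Hp: "\<forall>p. H p \<ge> 0" and HA: "\<forall>p A. finite A \<and> 1 \<le> card A \<and> card A \<le> p \<longrightarrow>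
        (\<exists>(P::nat set) m (\<pi>::'a \<Rightarrow> nat) (lam::nat \<Rightarrow> 'a).
           finite P \<and> median_algebra_on P m \<and> (\<forall>a\<in>A. \<pi> a \<in> P) \<and>
           (\<forall>x\<in>P. \<forall>y\<in>P. \<forall>z\<in>P. dist (lam (m x y z)) (\<mu> (lam x) (lam y) (lam z)) \<le> H p) \<and>
           (\<forall>a\<in>A. dist (lam (\<pi> a)) a \<le> H p))"
    unfolding C2_def by (elim exE conjE) blast
  have card3: "finite {a, b, c} \<and> 1 \<le> card {a, b, c} \<and> card {a, b, c} \<le> 3" for a b c :: 'a
    using card_length[of "[a, b, c]"] by (simp add: Suc_le_eq card_gt_0_iff)
  have card4: "finite {a, b, c, d} \<and> 1 \<le> card {a, b, c, d} \<and> card {a, b, c, d} \<le> 4" for a b c d :: 'a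
    using card_length[of "[a, b, c, d]"] by (simp add: Suc_le_eq card_gt_0_iff)
  define h3 where "h3 = H 3"
  have h3: "h3 \<ge> 0" unfolding h3_def using Hp by blast
  define e3 where "e3 = K * (3 * h3) + H0"
  have e3: "e3 \<ge> 0" unfolding e3_def using K h3 H0 by simp
  have C0: "C0' \<mu>"
    unfolding C0'_def
  proof (intro exI[of _ "2 * e3 + 2 * h3"] conjI allI impI)
    fix a1 a2
    obtain P m \<pi> lam where S: "median_algebra_on (P::nat set) m" "\<forall>a\<in>{a1, a2, a2}. \<pi> a \<in> P"
      "\<forall>x\<in>P. \<forall>y\<in>P. \<forall>z\<in>P. dist (lam (m x y z)) (\<mu> (lam x) (lam y) (lam z)) \<le> h3"
      "\<forall>a\<in>{a1, a2, a2}. dist (lam (\<pi> a)) a \<le> h3"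
      using HA[rule_format, OF card3[of a1 a2 a2]] unfolding h3_def by blast
    let ?x = "\<pi> a1" and ?y = "\<pi> a2"
    have P: "?x \<in> P" "?y \<in> P" using S(2) by auto
    have mxx: "m ?x ?x ?y = ?x" using S(1) P unfolding median_algebra_on_def by blast
    have d1: "dist (\<mu> a1 a1 a2) (\<mu> (lam ?x) (lam ?x) (lam ?y)) \<le> e3"
      unfolding e3_def by (rule approx3[OF KH K]) (use S(4) in \<open>auto simp: dist_commute\<close>)
    have d2: "dist (\<mu> (lam ?x) (lam ?x) (lam ?y)) (lam ?x) \<le> h3"
      using S(3) P mxx by (metis dist_commute)
    have d3: "dist (lam ?x) a1 \<le> h3" using S(4) by auto
    have "dist (\<mu> a1 a1 a2) a1 \<le> dist (\<mu> a1 a1 a2) (\<mu> (lam ?x) (lam ?x) (lam ?y)) + dist (\<mu> (lam ?x) (lam ?x) (lam ?y)) (lam ?x) + dist (lam ?x) a1"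
      using dist_triangle[of "\<mu> a1 a1 a2" a1 "lam ?x"] dist_triangle[of "\<mu> a1 a1 a2" "lam ?x" "\<mu> (lam ?x) (lam ?x) (lam ?y)"]
      by linarith
    then show "dist (\<mu> a1 a1 a2) a1 \<le> 2 * e3 + 2 * h3" using d1 d2 d3 e3 by linarith
  next
    fix a :: "nat \<Rightarrow> 'a" and \<sigma> :: "nat \<Rightarrow> nat" assume \<sigma>: "\<sigma> permutes {1,2,3}"
    obtain P m \<pi> lam where S: "median_algebra_on (P::nat set) m" "\<forall>b\<in>{a 1, a 2, a 3}. \<pi> b \<in> P"
      "\<forall>x\<in>P. \<forall>y\<in>P. \<forall>z\<in>P. dist (lam (m x y z)) (\<mu> (lam x) (lam y) (lam z)) \<le> h3"
      "\<forall>b\<in>{a 1, a 2, a 3}. dist (lam (\<pi> b)) b \<le> h3"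
      using HA[rule_format, OF card3[of "a 1" "a 2" "a 3"]] unfolding h3_def by blast
    define x where "x i = \<pi> (a i)" for i
    have inA: "a (\<sigma> i) \<in> {a 1, a 2, a 3}" if "i \<in> {1,2,3}" for i
      using permutes_in_image[OF \<sigma>, of i] that by auto
    have xP: "x i \<in> P" if "i \<in> {1,2,3}" for i using S(2) that unfolding x_def by auto
    have xsP: "x (\<sigma> i) \<in> P" if "i \<in> {1,2,3}" for i
      using xP permutes_in_image[OF \<sigma>, of i] that by blast
    have dx: "dist (lam (x i)) (a i) \<le> h3" if "i \<in> {1,2,3}" for i using S(4) that unfolding x_def by auto
    have dxs: "dist (lam (x (\<sigma> i))) (a (\<sigma> i)) \<le> h3" if "i \<in> {1,2,3}" for i
      using S(4) inA[OF that] unfolding x_def by auto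
    have meq: "m (x (\<sigma> 1)) (x (\<sigma> 2)) (x (\<sigma> 3)) = m (x 1) (x 2) (x 3)"
      using perm3_cases[OF \<sigma>] med_perm[OF S(1) xP[of 1] xP[of 2] xP[of 3]] by (elim disjE conjE) simp_all
    have d1: "dist (\<mu> (a (\<sigma> 1)) (a (\<sigma> 2)) (a (\<sigma> 3))) (\<mu> (lam (x (\<sigma> 1))) (lam (x (\<sigma> 2))) (lam (x (\<sigma> 3)))) \<le> e3"
      unfolding e3_def by (rule approx3[OF KH K]) (use dxs in \<open>auto simp: dist_commute\<close>)
    have d2: "dist (\<mu> (lam (x (\<sigma> 1))) (lam (x (\<sigma> 2))) (lam (x (\<sigma> 3)))) (lam (m (x 1) (x 2) (x 3))) \<le> h3"
      using S(3) xsP[of 1] xsP[of 2] xsP[of 3] meq by (metis dist_commute insertCI)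
    have d3: "dist (lam (m (x 1) (x 2) (x 3))) (\<mu> (lam (x 1)) (lam (x 2)) (lam (x 3))) \<le> h3"
      using S(3) xP[of 1] xP[of 2] xP[of 3] by simp
    have d4: "dist (\<mu> (lam (x 1)) (lam (x 2)) (lam (x 3))) (\<mu> (a 1) (a 2) (a 3)) \<le> e3"
      unfolding e3_def by (rule approx3[OF KH K]) (use dx in auto)
    let ?A = "\<mu> (a (\<sigma> 1)) (a (\<sigma> 2)) (a (\<sigma> 3))" and ?B = "\<mu> (lam (x (\<sigma> 1))) (lam (x (\<sigma> 2))) (lam (x (\<sigma> 3)))"
      and ?C = "lam (m (x 1) (x 2) (x 3))" and ?D = "\<mu> (lam (x 1)) (lam (x 2)) (lam (x 3))" and ?E = "\<mu> (a 1) (a 2) (a 3)"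
    have "dist ?A ?E \<le> dist ?A ?B + dist ?B ?C + dist ?C ?D + dist ?D ?E"
      using dist_triangle[of ?A ?E ?B] dist_triangle[of ?B ?E ?C] dist_triangle[of ?C ?E ?D] by linarith
    then show "dist ?A ?E \<le> 2 * e3 + 2 * h3" using d1 d2 d3 d4 by linarith
  qed
  have C1': "C1' \<mu>"
    unfolding C1'_def
  proof -
    have "dist (\<mu> a b c) (\<mu> a' b c) \<le> K * dist a a' + H0" for a a' b c using KH[of a b c a' b c] by simp
    then show "\<exists>K H. 0 \<le> K \<and> 0 \<le> H \<and> (\<forall>a a' b c. dist (\<mu> a b c) (\<mu> a' b c) \<le> K * dist a a' + H)"
      using K H0 by blast
  qed
  define h4 where "h4 = H 4"
  have h4: "h4 \<ge> 0" unfolding h4_def using Hp by blast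
  define E1 where "E1 = K * (3 * h4) + H0 + h4"
  have E1: "E1 \<ge> h4" unfolding E1_def using K h4 H0 by simp
  define E2 where "E2 = K * (3 * E1) + H0 + h4"
  have C2': "C2' \<mu>"
    unfolding C2'_def
  proof (intro exI[of _ "2 * E2 + 1"] conjI allI)
    have "E2 \<ge> 0" unfolding E2_def using E1 h4 K H0 by simp
    then show "2 * E2 + 1 > 0" by simp
  next
    fix a b c d
    obtain P m \<pi> lam where S: "median_algebra_on (P::nat set) m" "\<forall>u\<in>{a, b, c, d}. \<pi> u \<in> P"
      "\<forall>x\<in>P. \<forall>y\<in>P. \<forall>z\<in>P. dist (lam (m x y z)) (\<mu> (lam x) (lam y) (lam z)) \<le> h4"
      "\<forall>u\<in>{a, b, c, d}. dist (lam (\<pi> u)) u \<le> h4"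
      using HA[rule_format, OF card4[of a b c d]] unfolding h4_def by blast
    let ?X = "\<pi> a" and ?Y = "\<pi> b" and ?Z = "\<pi> c" and ?W = "\<pi> d"
    have P: "?X \<in> P" "?Y \<in> P" "?Z \<in> P" "?W \<in> P" using S(2) by auto
    have mP: "m x y z \<in> P" if "x \<in> P" "y \<in> P" "z \<in> P" for x y z
      using S(1) that unfolding median_algebra_on_def by blast
    have D: "dist u (lam (\<pi> u)) \<le> h4" if "u \<in> {a, b, c, d}" for u
    proof -
      have "dist (lam (\<pi> u)) u \<le> h4" using S(4) that by blast
      then show ?thesis by (simp add: dist_commute)
    qed
    have D': "dist u (lam (\<pi> u)) \<le> E1" if "u \<in> {a, b, c, d}" for u using D[OF that] E1 by simp
    have G: "dist (\<mu> (lam x) (lam y) (lam z)) (lam (m x y z)) \<le> h4" if "x \<in> P" "y \<in> P" "z \<in> P" for x y z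
      using S(3) that by (simp add: dist_commute)
    have e1: "dist (\<mu> a b c) (lam (m ?X ?Y ?Z)) \<le> E1"
    proof -
      have "dist (\<mu> a b c) (\<mu> (lam ?X) (lam ?Y) (lam ?Z)) \<le> K * (3 * h4) + H0"
        by (rule approx3[OF KH K]) (use D in auto)
      then show ?thesis using G[OF P(1-3)] dist_triangle[of "\<mu> a b c" "lam (m ?X ?Y ?Z)" "\<mu> (lam ?X) (lam ?Y) (lam ?Z)"]
        unfolding E1_def by linarith
    qed
    have e1': "dist (\<mu> c b d) (lam (m ?Z ?Y ?W)) \<le> E1"
    proof -
      have "dist (\<mu> c b d) (\<mu> (lam ?Z) (lam ?Y) (lam ?W)) \<le> K * (3 * h4) + H0"
        by (rule approx3[OF KH K]) (use D in auto)
      then show ?thesis using G[OF P(3) P(2) P(4)] dist_triangle[of "\<mu> c b d" "lam (m ?Z ?Y ?W)" "\<mu> (lam ?Z) (lam ?Y) (lam ?W)"]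
        unfolding E1_def by linarith
    qed
    have l: "dist (\<mu> (\<mu> a b c) b d) (lam (m (m ?X ?Y ?Z) ?Y ?W)) \<le> E2"
    proof -
      have "dist (\<mu> (\<mu> a b c) b d) (\<mu> (lam (m ?X ?Y ?Z)) (lam ?Y) (lam ?W)) \<le> K * (3 * E1) + H0"
        by (rule approx3[OF KH K]) (use e1 D' in auto)
      then show ?thesis using G[OF mP[OF P(1-3)] P(2) P(4)]
          dist_triangle[of "\<mu> (\<mu> a b c) b d" "lam (m (m ?X ?Y ?Z) ?Y ?W)" "\<mu> (lam (m ?X ?Y ?Z)) (lam ?Y) (lam ?W)"]
        unfolding E2_def by linarith
    qed
    have r: "dist (\<mu> a b (\<mu> c b d)) (lam (m ?X ?Y (m ?Z ?Y ?W))) \<le> E2"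
    proof -
      have "dist (\<mu> a b (\<mu> c b d)) (\<mu> (lam ?X) (lam ?Y) (lam (m ?Z ?Y ?W))) \<le> K * (3 * E1) + H0"
        by (rule approx3[OF KH K]) (use e1' D' in auto)
      then show ?thesis using G[OF P(1) P(2) mP[OF P(3) P(2) P(4)]]
          dist_triangle[of "\<mu> a b (\<mu> c b d)" "lam (m ?X ?Y (m ?Z ?Y ?W))" "\<mu> (lam ?X) (lam ?Y) (lam (m ?Z ?Y ?W))"]
        unfolding E2_def by linarith
    qed
    have eq: "m (m ?X ?Y ?Z) ?Y ?W = m ?X ?Y (m ?Z ?Y ?W)"
      using S(1) P unfolding median_algebra_on_def by blast
    show "dist (\<mu> (\<mu> a b c) b d) (\<mu> a b (\<mu> c b d)) \<le> 2 * E2 + 1"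
      using l r eq dist_triangle[of "\<mu> (\<mu> a b c) b d" "\<mu> a b (\<mu> c b d)" "lam (m ?X ?Y (m ?Z ?Y ?W))"]
      by (simp add: dist_commute)
  qed
  show ?thesis using C0 C1' C2' by blast
qed

theorem theorem3p1:
  fixes \<mu> :: "'a::metric_space \<Rightarrow> 'a \<Rightarrow> 'a \<Rightarrow> 'a"
  shows "C1 \<mu> \<and> C2 \<mu> \<longleftrightarrow> C0' \<mu> \<and> C1' \<mu> \<and> C2' \<mu>"
proof
  assume "C1 \<mu> \<and> C2 \<mu>" then show "C0' \<mu> \<and> C1' \<mu> \<and> C2' \<mu>" using forward by blast
next
  assume A: "C0' \<mu> \<and> C1' \<mu> \<and> C2' \<mu>"
  obtain K H where "K \<ge> 0" "H \<ge> 0" "\<forall>a b c a' b' c'.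
      dist (\<mu> a b c) (\<mu> a' b' c') \<le> K * (dist a a' + dist b b' + dist c c') + H"
    using C1_of A by blast
  then have "C1 \<mu>" unfolding C1_def by blast
  moreover have "C2 \<mu>"
    by (rule C2_of) (use eqv_bound A in blast)
  ultimately show "C1 \<mu> \<and> C2 \<mu>" by blast
qed

end
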